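(* Fix $h\in\mathbb N$. Letting $n$ range over $\mathbb N^+$ and $u,v$ over $\mathfrak S_n$, there are only finitely many isomorphism classes of $h$-flipclasses.
   Context: $\mathfrak S_n$ is the symmetric group on $[n]$, $T$ its transpositions, $\ell$ the length w.r.t. simple transpositions. The Bruhat graph $B(\mathfrak S_n)$ has an edge $x\xrightarrow{t}y$ iff $yx^{-1}=t\in T$ and $\ell(x)<\ell(y)$; $P_h(u,v)$ is the set of paths $u=x_0\to\cdots\to x_h=v$ of length $h$. Between two fixed vertices there are $0$ or $2$ paths of length $2$, each the flip of the other; the $i$-th flip operator $f_i$ ($i\in[h-1]$) on $P_h(u,v)$ replaces $x_{i-1}\to x_i\to x_{i+1}$ by its flip; an $h$-flipclass of $\mathfrak S_n$ is an orbit of $\langle f_1,\dots,f_{h-1}\rangle$ on some $P_h(u,v)$. Isomorphism: for an $h$-flipclass $F$ of $\mathfrak S_n$ and an $h$-flipclass $F'$ of $\mathfrak S_m$, an isomorphism from $F$ to $F'$ is a pair $(f,g)$ where $f$ is a bijection from the set of permutations occurring on paths of $F$ onto that for $F'$ such that applying $f$ vertexwise gives a bijection $F\to F'$ commuting with the flip operators; $g$ is a bijection from the set of transpositions labelling edges of paths of $F$ onto that for $F'$ such that if $\Gamma\in F$ has label sequence $(t_1,\dots,t_h)$ then its image has label sequence $(g(t_1),\dots,g(t_h))$; and $g$ is order-preserving for the lexicographic orders on transpositions ($(a,b)<(c,d)$, with $a<b$, $c<d$, iff $a<c$, or $a=c$ and $b<d$). *)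

theory Defs
  imports "HOL-Combinatorics.Combinatorics"
begin

definition sperm :: "nat \<Rightarrow> (nat \<Rightarrow> nat) set" where
  "sperm n = {p. p permutes {1..n}}"

definition simple_prod :: "nat list \<Rightarrow> nat \<Rightarrow> nat" where
  "simple_prod is = foldr (\<lambda>i p. transpose i (Suc i) \<circ> p) is id"

definition blen :: "nat \<Rightarrow> (nat \<Rightarrow> nat) \<Rightarrow> nat" where
  "blen n p = (LEAST k. \<exists>is. length is = k \<and> set is \<subseteq> {1..<n} \<and> simple_prod is = p)"

definition is_transp :: "nat \<Rightarrow> (nat \<Rightarrow> nat) \<Rightarrow> bool" where
  "is_transp n t \<longleftrightarrow> (\<exists>a b. 1 \<le> a \<and> a < b \<and> b \<le> n \<and> t = transpose a b)"

definition bedge :: "nat \<Rightarrow> (nat \<Rightarrow> nat) \<Rightarrow> (nat \<Rightarrow> nat) \<Rightarrow> bool" where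
  "bedge n x y \<longleftrightarrow> x \<in> sperm n \<and> y \<in> sperm n \<and> is_transp n (y \<circ> inv x) \<and> blen n x < blen n y"

definition bpaths :: "nat \<Rightarrow> nat \<Rightarrow> (nat \<Rightarrow> nat) \<Rightarrow> (nat \<Rightarrow> nat) \<Rightarrow> (nat \<Rightarrow> nat) list set" where
  "bpaths n h u v = {xs. length xs = Suc h \<and> xs ! 0 = u \<and> xs ! h = v \<and>
                         (\<forall>i<h. bedge n (xs ! i) (xs ! Suc i))}"

definition flip_vertex :: "nat \<Rightarrow> (nat \<Rightarrow> nat) \<Rightarrow> (nat \<Rightarrow> nat) \<Rightarrow> (nat \<Rightarrow> nat) \<Rightarrow> (nat \<Rightarrow> nat)" where
  "flip_vertex n x y z = (THE y'. y' \<noteq> y \<and> bedge n x y' \<and> bedge n y' z)"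

definition flip_op :: "nat \<Rightarrow> nat \<Rightarrow> (nat \<Rightarrow> nat) list \<Rightarrow> (nat \<Rightarrow> nat) list" where
  "flip_op n i xs = xs[i := flip_vertex n (xs ! (i - 1)) (xs ! i) (xs ! Suc i)]"

definition flip_rel :: "nat \<Rightarrow> nat \<Rightarrow> (nat \<Rightarrow> nat) \<Rightarrow> (nat \<Rightarrow> nat) \<Rightarrow>
    ((nat \<Rightarrow> nat) list \<times> (nat \<Rightarrow> nat) list) set" where
  "flip_rel n h u v = {(xs, flip_op n i xs) | xs i. xs \<in> bpaths n h u v \<and> 1 \<le> i \<and> i < h}"

text \<open>F is an h-flipclass of S_n: an orbit of the group generated by f_1,...,f_{h-1} on some P_h(u,v).\<close>
definition flipclass :: "nat \<Rightarrow> nat \<Rightarrow> (nat \<Rightarrow> nat) list set \<Rightarrow> bool" where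
  "flipclass n h F \<longleftrightarrow> (\<exists>u v \<Gamma>. u \<in> sperm n \<and> v \<in> sperm n \<and> \<Gamma> \<in> bpaths n h u v \<and>
      F = {\<Gamma>'. (\<Gamma>, \<Gamma>') \<in> (flip_rel n h u v \<union> (flip_rel n h u v)\<inverse>)\<^sup>*})"

text \<open>Transpositions are encoded as pairs (a,b) with a < b; label of the edge x -> y is y x^{-1}.\<close>
definition tlabel :: "(nat \<Rightarrow> nat) \<Rightarrow> (nat \<Rightarrow> nat) \<Rightarrow> nat \<times> nat" where
  "tlabel x y = (THE p. fst p < snd p \<and> y \<circ> inv x = transpose (fst p) (snd p))"

definition label_seq :: "(nat \<Rightarrow> nat) list \<Rightarrow> (nat \<times> nat) list" where
  "label_seq xs = map (\<lambda>i. tlabel (xs ! i) (xs ! Suc i)) [0..<length xs - 1]"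

definition verts :: "(nat \<Rightarrow> nat) list set \<Rightarrow> (nat \<Rightarrow> nat) set" where
  "verts F = (\<Union>xs\<in>F. set xs)"

definition labels :: "(nat \<Rightarrow> nat) list set \<Rightarrow> (nat \<times> nat) set" where
  "labels F = (\<Union>xs\<in>F. set (label_seq xs))"

definition lex_less :: "nat \<times> nat \<Rightarrow> nat \<times> nat \<Rightarrow> bool" where
  "lex_less s t \<longleftrightarrow> fst s < fst t \<or> (fst s = fst t \<and> snd s < snd t)"

definition flip_iso :: "nat \<Rightarrow> nat \<Rightarrow> (nat \<Rightarrow> nat) list set \<Rightarrow> nat \<Rightarrow> (nat \<Rightarrow> nat) list set \<Rightarrow>
    ((nat \<Rightarrow> nat) \<Rightarrow> (nat \<Rightarrow> nat)) \<Rightarrow> (nat \<times> nat \<Rightarrow> nat \<times> nat) \<Rightarrow> bool" where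
  "flip_iso n h F m F' f g \<longleftrightarrow>
     bij_betw f (verts F) (verts F') \<and>
     bij_betw (map f) F F' \<and>
     (\<forall>\<Gamma>\<in>F. \<forall>i. 1 \<le> i \<and> i < h \<longrightarrow> map f (flip_op n i \<Gamma>) = flip_op m i (map f \<Gamma>)) \<and>
     bij_betw g (labels F) (labels F') \<and>
     (\<forall>\<Gamma>\<in>F. label_seq (map f \<Gamma>) = map g (label_seq \<Gamma>)) \<and>
     (\<forall>s\<in>labels F. \<forall>t\<in>labels F. lex_less s t \<longrightarrow> lex_less (g s) (g t))"

end

theory Submission
  imports Defs
begin

definition invset :: "nat \<Rightarrow> (nat \<Rightarrow> nat) \<Rightarrow> (nat \<times> nat) set" where
  "invset n p = {(i,j). 1 \<le> i \<and> i < j \<and> j \<le> n \<and> p j < p i}"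

definition ninv :: "nat \<Rightarrow> (nat \<Rightarrow> nat) \<Rightarrow> nat" where
  "ninv n p = card (invset n p)"

lemma finite_invset: "finite (invset n p)"
  by (rule finite_subset[of _ "{1..n} \<times> {1..n}"]) (auto simp: invset_def)

definition psi :: "nat \<Rightarrow> nat \<Rightarrow> nat \<times> nat \<Rightarrow> nat \<times> nat" where
  "psi i j kl = (let k = fst kl; l = snd kl in
     if k = i \<and> j < l then (j, l)
     else if k = j \<and> j < l then (i, l)
     else if l = i \<and> k < i then (k, j)
     else if l = j \<and> k < i then (k, i)
     else (k, l))"

lemma psi_invol: "i < j \<Longrightarrow> psi i j (psi i j kl) = kl"
  by (cases kl) (auto simp: psi_def Let_def)

lemma inj_psi: "i < j \<Longrightarrow> inj (psi i j)"
  by (metis injI psi_invol)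

lemma transp_comp_vals:
  assumes "p permutes S" "i \<noteq> j"
  shows "(transpose (p i) (p j) \<circ> p) i = p j" "(transpose (p i) (p j) \<circ> p) j = p i"
    "m \<noteq> i \<Longrightarrow> m \<noteq> j \<Longrightarrow> (transpose (p i) (p j) \<circ> p) m = p m"
proof -
  have inj: "inj p" using assms(1) permutes_inj by blast
  show "(transpose (p i) (p j) \<circ> p) i = p j" by simp
  show "(transpose (p i) (p j) \<circ> p) j = p i" by simp
  assume "m \<noteq> i" "m \<noteq> j"
  then have "p m \<noteq> p i" "p m \<noteq> p j" using inj by (auto dest: injD)
  then show "(transpose (p i) (p j) \<circ> p) m = p m" by simp
qed

lemma A1:
  assumes "p permutes {1..n}" "1 \<le> i" "i < j" "j \<le> n" "p i < p j"
  shows "ninv n p < ninv n (transpose (p i) (p j) \<circ> p)"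
proof -
  define y where "y = transpose (p i) (p j) \<circ> p"
  have yi: "y i = p j" and yj: "y j = p i" and ym: "\<And>m. m \<noteq> i \<Longrightarrow> m \<noteq> j \<Longrightarrow> y m = p m"
    using transp_comp_vals[OF assms(1)] assms(3) unfolding y_def by auto
  have sub: "psi i j ` invset n p \<subseteq> invset n y - {(i,j)}"
  proof
    fix x assume "x \<in> psi i j ` invset n p"
    then obtain k l where kl: "(k,l) \<in> invset n p" "x = psi i j (k,l)" by auto
    then show "x \<in> invset n y - {(i,j)}"
      using assms yi yj ym unfolding invset_def psi_def Let_def
      by (auto split: if_splits) (metis less_trans nat_neq_iff)+
  qed
  have "card (insert (i,j) (psi i j ` invset n p)) \<le> card (invset n y)"
    by (rule card_mono[OF finite_invset]) (use sub assms yi yj in \<open>auto simp: invset_def\<close>)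
  moreover have "(i,j) \<notin> psi i j ` invset n p" using sub by auto
  moreover have "card (psi i j ` invset n p) = card (invset n p)"
    by (rule card_image) (meson inj_psi assms(3) inj_on_subset subset_UNIV)
  ultimately show ?thesis unfolding ninv_def y_def[symmetric]
    by (simp add: finite_invset)
qed

lemma A2:
  assumes "p permutes {1..n}" "1 \<le> i" "i < j" "j \<le> n" "p i < p j"
    and adj: "\<And>k. \<not> (p i < p k \<and> p k < p j)"
  shows "ninv n (transpose (p i) (p j) \<circ> p) \<le> ninv n p + 1"
proof -
  define y where "y = transpose (p i) (p j) \<circ> p"
  have yi: "y i = p j" and yj: "y j = p i" and ym: "\<And>m. m \<noteq> i \<Longrightarrow> m \<noteq> j \<Longrightarrow> y m = p m"
    using transp_comp_vals[OF assms(1)] assms(3) unfolding y_def by auto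
  have injp: "\<And>a b. p a = p b \<Longrightarrow> a = b" using permutes_inj[OF assms(1)] by (simp add: inj_eq)
  have sub: "psi i j ` (invset n y - {(i,j)}) \<subseteq> invset n p"
  proof
    fix x assume "x \<in> psi i j ` (invset n y - {(i,j)})"
    then obtain k l where kl: "(k,l) \<in> invset n y" "(k,l) \<noteq> (i,j)" "x = psi i j (k,l)" by auto
    have k1: "1 \<le> k" "k < l" "l \<le> n" "y l < y k" using kl(1) by (auto simp: invset_def)
    have "psi i j (k,l) \<in> invset n p"
    proof (cases "k = i \<and> j < l")
      case True
      then have "l \<noteq> i" "l \<noteq> j" "k = i" "j < l" using assms(3) by auto
      then have "p l < p j" using k1 yi ym[of l] by simp
      moreover have "psi i j (k,l) = (j,l)" using True by (simp add: psi_def)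
      ultimately show ?thesis using k1 assms(2,3) \<open>j < l\<close> by (simp add: invset_def)
    next
      case c1: False show ?thesis
      proof (cases "k = j \<and> j < l")
        case True then show ?thesis using k1 yj ym[of l] assms(2,3) by (auto simp: psi_def Let_def invset_def)
      next
        case c2: False show ?thesis
        proof (cases "l = i \<and> k < i")
          case True then show ?thesis using c1 c2 k1 yi ym[of k] assms(2,3,4) by (auto simp: psi_def Let_def invset_def)
        next
          case c3: False show ?thesis
          proof (cases "l = j \<and> k < i")
            case True then show ?thesis using c1 c2 c3 k1 yj ym[of k] assms(2,3,4) by (auto simp: psi_def Let_def invset_def)
          next
            case c4: False
            then have e: "psi i j (k,l) = (k,l)" using c1 c2 c3 by (auto simp: psi_def Let_def)
            show ?thesis
            proof (cases "k = i")
              case True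
              then have "l < j" "l \<noteq> j" using c1 k1 kl(2) by auto
              then have "y l = p l" using ym[of l] k1 True by auto
              then have "p l < p j" using k1 True yi by auto
              moreover have "p l \<noteq> p i" using injp[of l i] True k1 by auto
              ultimately have "p l < p i" using adj[of l] by linarith
              then show ?thesis using e k1 True by (auto simp: invset_def)
            next
              case ki: False
              show ?thesis
              proof (cases "l = j")
                case True
                then have "i < k" "k \<noteq> i" using c4 ki k1 by auto
                then have "y k = p k" using ym[of k] k1 True by auto
                then have "p i < p k" using k1 True yj by auto
                moreover have "p k \<noteq> p j" using injp[of k j] True k1 by auto
                ultimately have "p j < p k" using adj[of k] by linarith
                then show ?thesis using e k1 True by (auto simp: invset_def)
              next
                case lj: False
                have "k \<noteq> j" using c2 k1 lj assms(4) by auto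
                moreover have "l \<noteq> i" using c3 k1 ki by auto
                ultimately show ?thesis using e k1 ki lj ym[of k] ym[of l] by (auto simp: invset_def)
              qed
            qed
          qed
        qed
      qed
    qed
    then show "x \<in> invset n p" using kl by simp
  qed
  have "card (psi i j ` (invset n y - {(i,j)})) = card (invset n y - {(i,j)})"
    by (rule card_image) (meson inj_psi assms(3) inj_on_subset subset_UNIV)
  moreover have "card (psi i j ` (invset n y - {(i,j)})) \<le> card (invset n p)"
    by (rule card_mono[OF finite_invset sub])
  moreover have "card (invset n y) \<le> card (invset n y - {(i,j)}) + 1"
    by (simp add: card_Diff_singleton_if finite_invset) linarith
  ultimately show ?thesis unfolding ninv_def y_def[symmetric] by linarith
qed

lemma simple_prod_Cons: "simple_prod (v # w) = transpose v (Suc v) \<circ> simple_prod w"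
  by (simp add: simple_prod_def)

lemma simple_prod_permutes: "set w \<subseteq> {1..<n} \<Longrightarrow> simple_prod w permutes {1..n}"
proof (induction w)
  case Nil then show ?case using permutes_id[of "{1..n}"] by (simp add: simple_prod_def id_def)
next
  case (Cons v w)
  then have "transpose v (Suc v) permutes {1..n}" by (intro permutes_swap_id) auto
  moreover have "simple_prod w permutes {1..n}" using Cons by auto
  ultimately show ?case unfolding simple_prod_Cons by (rule permutes_compose[rotated])
qed

lemma perm_range: "p permutes {1..n} \<Longrightarrow> 1 \<le> v \<Longrightarrow> v \<le> n \<Longrightarrow> 1 \<le> p v \<and> p v \<le> n"
  using permutes_in_image[of p "{1..n}" v] by auto

lemma B2: "set w \<subseteq> {1..<n} \<Longrightarrow> ninv n (simple_prod w) \<le> length w"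
proof (induction w)
  case Nil
  have "invset n (\<lambda>a. a) = {}" by (auto simp: invset_def)
  then show ?case by (simp add: simple_prod_def ninv_def id_def)
next
  case (Cons v w)
  define q where "q = simple_prod w"
  have qp: "q permutes {1..n}" using Cons.prems simple_prod_permutes q_def by auto
  have iq: "inv q permutes {1..n}" using qp permutes_inv by blast
  have v: "1 \<le> v" "v < n" using Cons.prems by auto
  define i0 where "i0 = inv q v"
  define j0 where "j0 = inv q (Suc v)"
  have qi: "q i0 = v" "q j0 = Suc v" unfolding i0_def j0_def using qp permutes_inverses(1) by metis+
  have r: "1 \<le> i0" "i0 \<le> n" "1 \<le> j0" "j0 \<le> n" using perm_range[OF iq] v unfolding i0_def j0_def by auto
  have ne: "i0 \<noteq> j0" using qi by auto
  have IH: "ninv n q \<le> length w" using Cons q_def by auto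
  show ?case
  proof (cases "i0 < j0")
    case True
    have "ninv n (transpose (q i0) (q j0) \<circ> q) \<le> ninv n q + 1"
      by (rule A2[OF qp]) (use r True qi in auto)
    moreover have "length (v # w) = Suc (length w)" by simp
    ultimately show ?thesis using IH unfolding simple_prod_Cons q_def[symmetric] qi by linarith
  next
    case False
    then have lt: "j0 < i0" using ne by auto
    define y where "y = transpose v (Suc v) \<circ> q"
    have yp: "y permutes {1..n}" unfolding y_def
      by (intro permutes_compose[OF qp] permutes_swap_id) (use v in auto)
    have yv: "y j0 = v" "y i0 = Suc v" using qi by (auto simp: y_def)
    have "ninv n y < ninv n (transpose (y j0) (y i0) \<circ> y)"
      by (rule A1[OF yp]) (use r lt yv in auto)
    also have "transpose (y j0) (y i0) \<circ> y = q" unfolding yv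
      by (simp add: y_def comp_assoc[symmetric])
    finally show ?thesis using IH unfolding simple_prod_Cons q_def[symmetric] y_def[symmetric] by simp
  qed
qed

lemma descent:
  assumes "p permutes {1..n}" "p \<noteq> id"
  shows "\<exists>v. 1 \<le> v \<and> v < n \<and> inv p (Suc v) < inv p v"
proof (rule ccontr)
  assume nd: "\<not> ?thesis"
  define P where "P = inv p"
  have Pp: "P permutes {1..n}" using assms(1) permutes_inv P_def by blast
  have injP: "inj P" using Pp permutes_inj by blast
  have mono: "\<And>v. 1 \<le> v \<Longrightarrow> v < n \<Longrightarrow> P v < P (Suc v)"
  proof -
    fix v assume "1 \<le> v" "v < n"
    then have "\<not> P (Suc v) < P v" using nd P_def by auto
    moreover have "P (Suc v) \<noteq> P v"
    proof
      assume "P (Suc v) = P v"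
      then have "Suc v = v" using injD[OF injP] by blast
      then show False by simp
    qed
    ultimately show "P v < P (Suc v)" by linarith
  qed
  have ge: "\<forall>v. 1 \<le> v \<longrightarrow> v \<le> n \<longrightarrow> v \<le> P v"
  proof
    fix v show "1 \<le> v \<longrightarrow> v \<le> n \<longrightarrow> v \<le> P v"
    proof (induction v)
      case 0 then show ?case by simp
    next
      case (Suc v)
      show ?case
      proof (cases "v = 0")
        case True then show ?thesis using perm_range[OF Pp, of 1] by auto
      next
        case False
        show ?thesis
        proof (intro impI)
          assume "1 \<le> Suc v" "Suc v \<le> n"
          then have "v \<le> P v" "P v < P (Suc v)" using Suc False mono[of v] by auto
          then show "Suc v \<le> P (Suc v)" by simp
        qed
      qed
    qed
  qed
  have le: "\<forall>v. n - v = d \<longrightarrow> 1 \<le> v \<longrightarrow> v \<le> n \<longrightarrow> P v \<le> v" for d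
  proof (induction d)
    case 0 show ?case
    proof (intro allI impI)
      fix v assume "n - v = 0" "1 \<le> v" "v \<le> n"
      then have "v = n" by simp
      then show "P v \<le> v" using perm_range[OF Pp, of v] \<open>1 \<le> v\<close> by simp
    qed
  next
    case (Suc d)
    show ?case
    proof (intro allI impI)
      fix v assume a: "n - v = Suc d" "1 \<le> v" "v \<le> n"
      then have "P (Suc v) \<le> Suc v" using Suc.IH[rule_format, of "Suc v"] by simp
      moreover have "P v < P (Suc v)" using mono a by auto
      ultimately show "P v \<le> v" by auto
    qed
  qed
  have "P v = v" for v
  proof (cases "1 \<le> v \<and> v \<le> n")
    case True
    then have "v \<le> P v" using ge by blast
    moreover have "P v \<le> v" using le[of "n - v"] True by blast
    ultimately show ?thesis by simp
  next
    case False then show ?thesis using Pp unfolding permutes_def by auto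
  qed
  then have "P = id" by auto
  have "p = inv (inv p)" by (simp add: inv_inv_eq permutes_bij[OF assms(1)])
  also have "\<dots> = id" using \<open>P = id\<close> P_def by simp
  finally have "p = id" .
  with assms(2) show False by simp
qed

lemma B1: "p permutes {1..n} \<Longrightarrow> \<exists>w. length w = ninv n p \<and> set w \<subseteq> {1..<n} \<and> simple_prod w = p"
proof (induction "ninv n p" arbitrary: p rule: less_induct)
  case less
  show ?case
  proof (cases "p = id")
    case True
    have "invset n (\<lambda>a. a) = {}" by (auto simp: invset_def)
    then show ?thesis using True by (intro exI[of _ "[]"]) (simp add: simple_prod_def ninv_def id_def)
  next
    case False
    obtain v where v: "1 \<le> v" "v < n" "inv p (Suc v) < inv p v" using descent[OF less.prems False] by blast
    have ip: "inv p permutes {1..n}" using less.prems permutes_inv by blast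
    define i0 where "i0 = inv p v"
    define j0 where "j0 = inv p (Suc v)"
    have pv: "p i0 = v" "p j0 = Suc v" unfolding i0_def j0_def using less.prems permutes_inverses(1) by metis+
    have r: "1 \<le> i0" "i0 \<le> n" "1 \<le> j0" "j0 \<le> n" using perm_range[OF ip] v unfolding i0_def j0_def by auto
    have lt: "j0 < i0" using v i0_def j0_def by simp
    define q where "q = transpose v (Suc v) \<circ> p"
    have qp: "q permutes {1..n}" unfolding q_def
      by (intro permutes_compose[OF less.prems] permutes_swap_id) (use v in auto)
    have qv: "q j0 = v" "q i0 = Suc v" using pv by (auto simp: q_def)
    have bk: "transpose (q j0) (q i0) \<circ> q = p" unfolding qv
      by (simp add: q_def comp_assoc[symmetric])
    have "ninv n q < ninv n (transpose (q j0) (q i0) \<circ> q)"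
      by (rule A1[OF qp]) (use r lt qv in auto)
    then have lt2: "ninv n q < ninv n p" using bk by simp
    have "ninv n (transpose (q j0) (q i0) \<circ> q) \<le> ninv n q + 1"
      by (rule A2[OF qp]) (use r lt qv in auto)
    then have le2: "ninv n p \<le> ninv n q + 1" using bk by simp
    obtain w where w: "length w = ninv n q" "set w \<subseteq> {1..<n}" "simple_prod w = q"
      using less.hyps[OF lt2 qp] by blast
    have "simple_prod (v # w) = p" using w bk qv by (simp add: simple_prod_Cons)
    then show ?thesis using w v lt2 le2
      by (intro exI[of _ "v # w"]) auto
  qed
qed

lemma blen_eq: "p permutes {1..n} \<Longrightarrow> blen n p = ninv n p"
  unfolding blen_def
proof (rule Least_equality)
  assume "p permutes {1..n}"
  then show "\<exists>ws. length ws = ninv n p \<and> set ws \<subseteq> {1..<n} \<and> simple_prod ws = p" using B1 by blast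
next
  fix k assume "\<exists>ws. length ws = k \<and> set ws \<subseteq> {1..<n} \<and> simple_prod ws = p"
  then show "ninv n p \<le> k" using B2 by blast
qed

definition ok :: "(nat \<Rightarrow> nat) \<Rightarrow> nat \<Rightarrow> nat \<Rightarrow> bool" where
  "ok x a b \<longleftrightarrow> (a < b \<longleftrightarrow> inv x a < inv x b)"

lemma inv_Tx:
  assumes "x permutes S"
  shows "inv (transpose a b \<circ> x) = inv x \<circ> transpose a b"
  using o_inv_distrib[of "transpose a b" x] permutes_bij[OF assms] by simp

lemma edge_lt:
  assumes x: "x \<in> sperm n" and ab: "1 \<le> a" "a < b" "b \<le> n"
  shows "bedge n x (transpose a b \<circ> x) \<longleftrightarrow> inv x a < inv x b"
proof -
  have xp: "x permutes {1..n}" using x by (simp add: sperm_def)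
  define y where "y = transpose a b \<circ> x"
  have yp: "y permutes {1..n}" unfolding y_def
    by (intro permutes_compose[OF xp] permutes_swap_id) (use ab in auto)
  have "y \<circ> inv x = transpose a b" unfolding y_def
    by (simp add: comp_assoc permutes_inv_o(1)[OF xp])
  then have tr: "is_transp n (y \<circ> inv x)" using ab unfolding is_transp_def by blast
  have be: "bedge n x y \<longleftrightarrow> ninv n x < ninv n y"
    using tr x yp by (simp add: bedge_def sperm_def blen_eq xp)
  have ip: "inv x permutes {1..n}" using xp permutes_inv by blast
  define i where "i = inv x a"
  define j where "j = inv x b"
  have xi: "x i = a" "x j = b" unfolding i_def j_def using xp permutes_inverses(1) by metis+
  have r: "1 \<le> i" "i \<le> n" "1 \<le> j" "j \<le> n" using perm_range[OF ip] ab unfolding i_def j_def by auto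
  have ne: "i \<noteq> j" using xi ab by auto
  show ?thesis
  proof (cases "i < j")
    case True
    have "ninv n x < ninv n (transpose (x i) (x j) \<circ> x)"
      by (rule A1[OF xp]) (use r True xi ab in auto)
    then have "ninv n x < ninv n y" unfolding xi y_def .
    then have "bedge n x y" using be by simp
    then show ?thesis using True unfolding i_def j_def y_def by simp
  next
    case False
    then have lt: "j < i" using ne by auto
    have yv: "y j = a" "y i = b" using xi by (auto simp: y_def)
    have "ninv n y < ninv n (transpose (y j) (y i) \<circ> y)"
      by (rule A1[OF yp]) (use r lt yv ab in auto)
    also have "transpose (y j) (y i) \<circ> y = x" unfolding yv
      by (simp add: y_def comp_assoc[symmetric])
    finally have "\<not> bedge n x y" using be by simp
    then show ?thesis using False unfolding i_def j_def y_def by simp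
  qed
qed

lemma edge:
  assumes x: "x \<in> sperm n" and ab: "1 \<le> a" "a \<le> n" "1 \<le> b" "b \<le> n" "a \<noteq> b"
  shows "bedge n x (transpose a b \<circ> x) \<longleftrightarrow> ok x a b"
proof (cases "a < b")
  case True then show ?thesis using edge_lt[OF x] ab by (simp add: ok_def)
next
  case False
  then have lt: "b < a" using ab by auto
  have inj: "inj (inv x)" using x permutes_inj permutes_inv by (metis mem_Collect_eq sperm_def)
  have "inv x a \<noteq> inv x b" using inj ab(5) by (auto dest: injD)
  then show ?thesis using edge_lt[OF x, of b a] ab lt transpose_commute[of a b]
    by (auto simp: ok_def)
qed

lemma bedge_decomp:
  assumes "bedge n x y"
  shows "\<exists>a b. 1 \<le> a \<and> a < b \<and> b \<le> n \<and> y = transpose a b \<circ> x"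
proof -
  obtain a b where ab: "1 \<le> a" "a < b" "b \<le> n" "y \<circ> inv x = transpose a b"
    using assms unfolding bedge_def is_transp_def by blast
  have xp: "x permutes {1..n}" using assms by (simp add: bedge_def sperm_def)
  have "y = (y \<circ> inv x) \<circ> x" by (simp add: comp_assoc permutes_inv_o(2)[OF xp])
  then show ?thesis using ab by metis
qed

lemma right_cancel:
  assumes "f \<circ> x = g \<circ> x" "surj x" shows "f = g"
proof
  fix k
  obtain m where "k = x m" using assms(2) by (metis surj_def)
  then show "f k = g k" using assms(1) by (metis comp_apply)
qed

lemma alg1_p:
  assumes "a \<noteq> b" "c \<noteq> d" "p \<noteq> q" "r \<noteq> s"
    and eq: "transpose c d \<circ> transpose a b = transpose r s \<circ> transpose p q"
    and nid: "transpose c d \<circ> transpose a b \<noteq> id"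
  shows "p \<in> {a,b,c,d}"
proof (rule ccontr)
  assume np: "p \<notin> {a,b,c,d}"
  have "(transpose c d \<circ> transpose a b) p = p" using np by simp
  then have e: "transpose r s q = p" using eq by simp
  have "transpose r s = transpose p q"
  proof (cases "q = r")
    case True then have "s = p" using e assms(3) by (auto simp: transpose_def split: if_splits)
    then show ?thesis using True transpose_commute by metis
  next
    case False
    then have "q = s" "r = p" using e assms(3) by (auto simp: transpose_def split: if_splits)
    then show ?thesis by simp
  qed
  then have "transpose r s \<circ> transpose p q = id" by simp
  then show False using eq nid by simp
qed

lemma alg1:
  assumes "a \<noteq> b" "c \<noteq> d" "p \<noteq> q" "r \<noteq> s"
    and eq: "transpose c d \<circ> transpose a b = transpose r s \<circ> transpose p q"
    and nid: "transpose c d \<circ> transpose a b \<noteq> id"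
  shows "p \<in> {a,b,c,d}" "q \<in> {a,b,c,d}"
  using alg1_p[OF assms] apply simp
  using alg1_p[of a b c d q p r s] assms transpose_commute[of p q] by auto

lemma cyc_comb:
  fixes al be ga A B C :: nat
  assumes "al \<noteq> be" "be \<noteq> ga" "al \<noteq> ga" "A \<noteq> B" "B \<noteq> C" "A \<noteq> C"
    and "(al < be \<longleftrightarrow> A < B) \<and> (al < ga \<longleftrightarrow> B < C)"
  shows "((be < ga \<longleftrightarrow> B < C) \<and> (be < al \<longleftrightarrow> C < A)) \<longleftrightarrow> \<not> ((ga < al \<longleftrightarrow> C < A) \<and> (ga < be \<longleftrightarrow> A < B))"
  using assms by (cases "al < be"; cases "be < ga"; cases "al < ga"; cases "A < B"; cases "B < C"; cases "A < C") auto

lemma sperm_comp: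
  assumes "x \<in> sperm n" "1 \<le> a" "a \<le> n" "1 \<le> b" "b \<le> n"
  shows "transpose a b \<circ> x \<in> sperm n"
  using assms unfolding sperm_def
  by (auto intro!: permutes_compose permutes_swap_id)

lemma cyc:
  assumes x: "x \<in> sperm n"
    and rng: "1 \<le> al" "al \<le> n" "1 \<le> be" "be \<le> n" "1 \<le> ga" "ga \<le> n"
    and dist: "al \<noteq> be" "be \<noteq> ga" "al \<noteq> ga"
    and y: "y = transpose al be \<circ> x" and z: "z = transpose al ga \<circ> y"
    and e1: "bedge n x y" and e2: "bedge n y z" and M: "al \<in> M" "be \<in> M" "ga \<in> M"
  shows "\<exists>y'. y' \<noteq> y \<and> {w. bedge n x w \<and> bedge n w z} = {y, y'} \<and>
     (\<exists>p q r s. p \<in> M \<and> q \<in> M \<and> r \<in> M \<and> s \<in> M \<and>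
        y' = transpose p q \<circ> x \<and> z = transpose r s \<circ> y')"
proof -
  have xp: "x permutes {1..n}" using x by (simp add: sperm_def)
  define P where "P = inv x"
  have injP: "inj P" unfolding P_def using xp permutes_inj permutes_inv by blast
  have xP: "\<And>v. x (P v) = v" unfolding P_def using xp permutes_inverses(1) by metis
  define w2 where "w2 = transpose be ga \<circ> x"
  define w3 where "w3 = transpose ga al \<circ> x"
  have ys: "y \<in> sperm n" using sperm_comp[OF x] rng y by auto
  have w2s: "w2 \<in> sperm n" using sperm_comp[OF x] rng w2_def by auto
  have w3s: "w3 \<in> sperm n" using sperm_comp[OF x] rng w3_def by auto
  have id1: "transpose al ga \<circ> transpose al be = transpose be al \<circ> transpose be ga"
    using dist by (auto simp: fun_eq_iff transpose_def)
  have id2: "transpose al ga \<circ> transpose al be = transpose ga be \<circ> transpose ga al"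
    using dist by (auto simp: fun_eq_iff transpose_def)
  have z1: "z = transpose al ga \<circ> transpose al be \<circ> x" using y z by (simp add: comp_assoc)
  have z2: "z = transpose be al \<circ> w2" using z1 id1 w2_def by (simp add: comp_assoc)
  have z3: "z = transpose ga be \<circ> w3" using z1 id2 w3_def by (simp add: comp_assoc)
  have iy: "inv y = P \<circ> transpose al be" using inv_Tx[OF xp] y P_def by simp
  have iw2: "inv w2 = P \<circ> transpose be ga" using inv_Tx[OF xp] w2_def P_def by simp
  have iw3: "inv w3 = P \<circ> transpose ga al" using inv_Tx[OF xp] w3_def P_def by simp
  have c1: "(al < be \<longleftrightarrow> P al < P be) \<and> (al < ga \<longleftrightarrow> P be < P ga)"
    using e1 e2 edge[OF x, of al be] edge[OF ys, of al ga] rng dist y z iy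
    by (simp add: ok_def P_def)
  have m2: "w2 \<in> {w. bedge n x w \<and> bedge n w z} \<longleftrightarrow>
      ((be < ga \<longleftrightarrow> P be < P ga) \<and> (be < al \<longleftrightarrow> P ga < P al))"
    using edge[OF x, of be ga] edge[OF w2s, of be al] rng dist z2 iw2 w2_def
    by (simp add: ok_def P_def)
  have m3: "w3 \<in> {w. bedge n x w \<and> bedge n w z} \<longleftrightarrow>
      ((ga < al \<longleftrightarrow> P ga < P al) \<and> (ga < be \<longleftrightarrow> P al < P be))"
    using edge[OF x, of ga al] edge[OF w3s, of ga be] rng dist z3 iw3 w3_def
    by (simp add: ok_def P_def)
  have Pd: "P al \<noteq> P be" "P be \<noteq> P ga" "P al \<noteq> P ga" using injP dist by (auto dest: injD)
  have xor: "w2 \<in> {w. bedge n x w \<and> bedge n w z} \<longleftrightarrow> w3 \<notin> {w. bedge n x w \<and> bedge n w z}"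
    unfolding m2 m3 using cyc_comb[OF dist Pd c1] by blast
  have d12: "y \<noteq> w2"
  proof
    assume "y = w2" then have "y (P al) = w2 (P al)" by simp
    then show False using xP dist by (simp add: y w2_def)
  qed
  have d13: "y \<noteq> w3"
  proof
    assume "y = w3" then have "y (P be) = w3 (P be)" by simp
    then show False using xP dist by (simp add: y w3_def)
  qed
  have d23: "w2 \<noteq> w3"
  proof
    assume "w2 = w3" then have "w2 (P be) = w3 (P be)" by simp
    then show False using xP dist by (simp add: w2_def w3_def)
  qed
  have nid: "transpose al ga \<circ> transpose al be \<noteq> id"
  proof
    assume "transpose al ga \<circ> transpose al be = id"
    then have "(transpose al ga \<circ> transpose al be) al = al" by simp
    then show False using dist by simp
  qed
  have sub: "{w. bedge n x w \<and> bedge n w z} \<subseteq> {y, w2, w3}"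
  proof
    fix w assume "w \<in> {w. bedge n x w \<and> bedge n w z}"
    then have a1: "bedge n x w" and a2: "bedge n w z" by auto
    obtain p q where pq: "1 \<le> p" "p < q" "q \<le> n" "w = transpose p q \<circ> x" using bedge_decomp[OF a1] by blast
    obtain r s where rs: "1 \<le> r" "r < s" "s \<le> n" "z = transpose r s \<circ> w" using bedge_decomp[OF a2] by blast
    have "transpose al ga \<circ> transpose al be \<circ> x = transpose r s \<circ> transpose p q \<circ> x"
      using z1 pq rs by (simp add: comp_assoc)
    then have eq: "transpose al ga \<circ> transpose al be = transpose r s \<circ> transpose p q"
      using right_cancel permutes_surj[OF xp] by blast
    have "p \<in> {al,be,al,ga}" "q \<in> {al,be,al,ga}"
      using alg1[OF dist(1) dist(3) _ _ eq nid] pq rs by auto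
    then have "transpose p q = transpose al be \<or> transpose p q = transpose be ga \<or> transpose p q = transpose ga al"
      using pq transpose_commute[of al be] transpose_commute[of be ga] transpose_commute[of ga al] by auto
    then show "w \<in> {y, w2, w3}" using pq y w2_def w3_def by auto
  qed
  have yin: "y \<in> {w. bedge n x w \<and> bedge n w z}" using e1 e2 by simp
  show ?thesis
  proof (cases "w2 \<in> {w. bedge n x w \<and> bedge n w z}")
    case True
    then have "{w. bedge n x w \<and> bedge n w z} = {y, w2}" using xor sub yin by blast
    show ?thesis
    proof (rule exI[of _ w2], intro conjI)
      show "w2 \<noteq> y" using d12 by simp
      show "{w. bedge n x w \<and> bedge n w z} = {y, w2}" by fact
      show "\<exists>p q r s. p \<in> M \<and> q \<in> M \<and> r \<in> M \<and> s \<in> M \<and>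
        w2 = transpose p q \<circ> x \<and> z = transpose r s \<circ> w2"
        by (rule exI[of _ be], rule exI[of _ ga], rule exI[of _ be], rule exI[of _ al]) (simp add: z2 w2_def M)
    qed
  next
    case False
    then have "w3 \<in> {w. bedge n x w \<and> bedge n w z}" using xor by blast
    then have "{w. bedge n x w \<and> bedge n w z} = {y, w3}" using False sub yin by blast
    show ?thesis
    proof (rule exI[of _ w3], intro conjI)
      show "w3 \<noteq> y" using d13 by simp
      show "{w. bedge n x w \<and> bedge n w z} = {y, w3}" by fact
      show "\<exists>p q r s. p \<in> M \<and> q \<in> M \<and> r \<in> M \<and> s \<in> M \<and>
        w3 = transpose p q \<circ> x \<and> z = transpose r s \<circ> w3"
        by (rule exI[of _ ga], rule exI[of _ al], rule exI[of _ ga], rule exI[of _ be]) (simp add: z3 w3_def M)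
    qed
  qed
qed

lemma alg2:
  assumes dist: "a \<noteq> b" "a \<noteq> c" "a \<noteq> d" "b \<noteq> c" "b \<noteq> d" "c \<noteq> d"
    and pq: "p \<in> {a,b,c,d}" "q \<in> {a,b,c,d}" "p \<noteq> q" "r \<noteq> s"
    and eq: "transpose c d \<circ> transpose a b = transpose r s \<circ> transpose p q"
  shows "transpose p q = transpose a b \<or> transpose p q = transpose c d"
proof -
  have e: "\<And>k. transpose c d (transpose a b k) = transpose r s (transpose p q k)"
    using eq by (metis comp_apply)
  have ea: "transpose c d (transpose a b a) = transpose r s (transpose p q a)" by (rule e)
  have eb: "transpose c d (transpose a b b) = transpose r s (transpose p q b)" by (rule e)
  have ec: "transpose c d (transpose a b c) = transpose r s (transpose p q c)" by (rule e)
  have ed: "transpose c d (transpose a b d) = transpose r s (transpose p q d)" by (rule e)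
  show ?thesis
    using pq dist ea eb ec ed transpose_commute[of a b] transpose_commute[of c d]
    by (auto simp: transpose_def split: if_splits)
qed

lemma disj:
  assumes x: "x \<in> sperm n"
    and rng: "1 \<le> a" "a \<le> n" "1 \<le> b" "b \<le> n" "1 \<le> c" "c \<le> n" "1 \<le> d" "d \<le> n"
    and dist: "a \<noteq> b" "a \<noteq> c" "a \<noteq> d" "b \<noteq> c" "b \<noteq> d" "c \<noteq> d"
    and y: "y = transpose a b \<circ> x" and z: "z = transpose c d \<circ> y"
    and e1: "bedge n x y" and e2: "bedge n y z"
  shows "\<exists>y'. y' \<noteq> y \<and> {w. bedge n x w \<and> bedge n w z} = {y, y'} \<and>
     (\<exists>p q r s. p \<in> {a,b,c,d} \<and> q \<in> {a,b,c,d} \<and> r \<in> {a,b,c,d} \<and> s \<in> {a,b,c,d} \<and>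
        y' = transpose p q \<circ> x \<and> z = transpose r s \<circ> y')"
proof -
  have xp: "x permutes {1..n}" using x by (simp add: sperm_def)
  define P where "P = inv x"
  have xP: "\<And>v. x (P v) = v" unfolding P_def using xp permutes_inverses(1) by metis
  define y' where "y' = transpose c d \<circ> x"
  have ys: "y \<in> sperm n" using sperm_comp[OF x] rng y by auto
  have y's: "y' \<in> sperm n" using sperm_comp[OF x] rng y'_def by auto
  have comm: "transpose c d \<circ> transpose a b = transpose a b \<circ> transpose c d"
    using dist by (auto simp: fun_eq_iff transpose_def)
  have z1: "z = transpose c d \<circ> transpose a b \<circ> x" using y z by (simp add: comp_assoc)
  have z2: "z = transpose a b \<circ> y'" using z1 comm y'_def by (simp add: comp_assoc)
  have iy: "inv y = P \<circ> transpose a b" using inv_Tx[OF xp] y P_def by simp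
  have iy': "inv y' = P \<circ> transpose c d" using inv_Tx[OF xp] y'_def P_def by simp
  have c1: "ok x a b" "ok y c d" using e1 e2 edge[OF x, of a b] edge[OF ys, of c d] rng dist y z by auto
  have "ok x c d" using c1(2) iy dist by (simp add: ok_def P_def)
  then have f1: "bedge n x y'" using edge[OF x, of c d] rng dist y'_def by simp
  have "ok y' a b" using c1(1) iy' dist by (simp add: ok_def P_def)
  then have f2: "bedge n y' z" using edge[OF y's, of a b] rng dist z2 by simp
  have d: "y' \<noteq> y"
  proof
    assume "y' = y" then have "y' (P a) = y (P a)" by simp
    then show False using xP dist by (simp add: y y'_def)
  qed
  have nid: "transpose c d \<circ> transpose a b \<noteq> id"
  proof
    assume "transpose c d \<circ> transpose a b = id"
    then have "(transpose c d \<circ> transpose a b) a = a" by simp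
    then show False using dist by simp
  qed
  have sub: "{w. bedge n x w \<and> bedge n w z} \<subseteq> {y, y'}"
  proof
    fix w assume "w \<in> {w. bedge n x w \<and> bedge n w z}"
    then have a1: "bedge n x w" and a2: "bedge n w z" by auto
    obtain p q where pq: "1 \<le> p" "p < q" "q \<le> n" "w = transpose p q \<circ> x" using bedge_decomp[OF a1] by blast
    obtain r s where rs: "1 \<le> r" "r < s" "s \<le> n" "z = transpose r s \<circ> w" using bedge_decomp[OF a2] by blast
    have "transpose c d \<circ> transpose a b \<circ> x = transpose r s \<circ> transpose p q \<circ> x"
      using z1 pq rs by (simp add: comp_assoc)
    then have eq: "transpose c d \<circ> transpose a b = transpose r s \<circ> transpose p q"
      using right_cancel permutes_surj[OF xp] by blast
    have "p \<in> {a,b,c,d}" "q \<in> {a,b,c,d}"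
      using alg1[OF dist(1) dist(6) _ _ eq nid] pq rs by auto
    then have "transpose p q = transpose a b \<or> transpose p q = transpose c d"
      using alg2[OF dist _ _ _ _ eq] pq rs by auto
    then show "w \<in> {y, y'}" using pq y y'_def by auto
  qed
  have "{w. bedge n x w \<and> bedge n w z} = {y, y'}" using sub e1 e2 f1 f2 by blast
  show ?thesis
  proof (rule exI[of _ y'], intro conjI)
    show "y' \<noteq> y" by fact
    show "{w. bedge n x w \<and> bedge n w z} = {y, y'}" by fact
    show "\<exists>p q r s. p \<in> {a,b,c,d} \<and> q \<in> {a,b,c,d} \<and> r \<in> {a,b,c,d} \<and> s \<in> {a,b,c,d} \<and>
        y' = transpose p q \<circ> x \<and> z = transpose r s \<circ> y'"
      by (rule exI[of _ c], rule exI[of _ d], rule exI[of _ a], rule exI[of _ b]) (simp add: z2 y'_def)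
  qed
qed

lemma flip_main:
  assumes x: "x \<in> sperm n"
    and rng: "1 \<le> a" "a \<le> n" "1 \<le> b" "b \<le> n" "1 \<le> c" "c \<le> n" "1 \<le> d" "d \<le> n"
    and ab: "a \<noteq> b" and cd: "c \<noteq> d"
    and y: "y = transpose a b \<circ> x" and z: "z = transpose c d \<circ> y"
    and e1: "bedge n x y" and e2: "bedge n y z"
  shows "\<exists>y'. y' \<noteq> y \<and> {w. bedge n x w \<and> bedge n w z} = {y, y'} \<and>
     (\<exists>p q r s. p \<in> {a,b,c,d} \<and> q \<in> {a,b,c,d} \<and> r \<in> {a,b,c,d} \<and> s \<in> {a,b,c,d} \<and>
        y' = transpose p q \<circ> x \<and> z = transpose r s \<circ> y')"
proof -
  have tc: "\<And>u v. transpose u v = transpose v u" using transpose_commute by metis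
  consider (same) "{a,b} = {c,d}" | (dj) "a \<noteq> c" "a \<noteq> d" "b \<noteq> c" "b \<noteq> d"
    | (s1) "a = c" "b \<noteq> d" | (s2) "a = d" "b \<noteq> c" | (s3) "b = c" "a \<noteq> d" | (s4) "b = d" "a \<noteq> c"
    using ab cd by blast
  then show ?thesis
  proof cases
    case same
    then have "transpose c d = transpose a b" using tc ab cd by (auto simp: doubleton_eq_iff)
    then have "z = x" using y z by (simp add: comp_assoc[symmetric])
    then show ?thesis using e1 e2 by (auto simp: bedge_def)
  next
    case dj then show ?thesis using disj[OF x rng _ _ _ _ _ cd y z e1 e2] ab by blast
  next
    case s1
    have zz: "z = transpose a d \<circ> y" using z s1 by simp
    show ?thesis
      by (rule cyc[OF x rng(1,2) rng(3,4) rng(7,8) ab _ _ y zz e1 e2]) (use s1 cd in auto)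
  next
    case s2
    have zz: "z = transpose a c \<circ> y" using z s2 tc[of c a] by simp
    show ?thesis
      by (rule cyc[OF x rng(1,2) rng(3,4) rng(5,6) ab _ _ y zz e1 e2]) (use s2 cd in auto)
  next
    case s3
    have yy: "y = transpose b a \<circ> x" using y tc[of a b] by simp
    have zz: "z = transpose b d \<circ> y" using z s3 by simp
    show ?thesis
      by (rule cyc[OF x rng(3,4) rng(1,2) rng(7,8) _ _ _ yy zz e1 e2]) (use s3 cd ab in auto)
  next
    case s4
    have yy: "y = transpose b a \<circ> x" using y tc[of a b] by simp
    have zz: "z = transpose b c \<circ> y" using z s4 tc[of c b] by simp
    show ?thesis
      by (rule cyc[OF x rng(3,4) rng(1,2) rng(5,6) _ _ _ yy zz e1 e2]) (use s4 cd ab in auto)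
  qed
qed

lemma bedge_ne: "bedge n x (transpose a b \<circ> x) \<Longrightarrow> a \<noteq> b"
  by (auto simp: bedge_def)

lemma bedge_sperm: "bedge n x y \<Longrightarrow> x \<in> sperm n \<and> y \<in> sperm n"
  by (simp add: bedge_def)

lemma flip_vertex_eq:
  assumes "{w. bedge n x w \<and> bedge n w z} = {y, y'}" "y \<noteq> y'"
  shows "flip_vertex n x y z = y'" "flip_vertex n x y' z = y"
proof -
  have m: "\<And>w. (bedge n x w \<and> bedge n w z) \<longleftrightarrow> w = y \<or> w = y'" using assms(1) by blast
  show "flip_vertex n x y z = y'" unfolding flip_vertex_def
    by (rule the_equality) (use m assms(2) in auto)
  show "flip_vertex n x y' z = y" unfolding flip_vertex_def
    by (rule the_equality) (use m assms(2) in auto)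
qed

lemma flip_bp:
  assumes G: "G \<in> bpaths n h u v" and i: "1 \<le> i" "i < h"
    and rng: "1 \<le> a" "a \<le> n" "1 \<le> b" "b \<le> n" "1 \<le> c" "c \<le> n" "1 \<le> d" "d \<le> n"
    and y: "G ! i = transpose a b \<circ> G ! (i - 1)" and z: "G ! Suc i = transpose c d \<circ> G ! i"
  shows "flip_op n i G \<in> bpaths n h u v \<and> flip_op n i (flip_op n i G) = G \<and>
     (\<exists>p q r s. p \<in> {a,b,c,d} \<and> q \<in> {a,b,c,d} \<and> r \<in> {a,b,c,d} \<and> s \<in> {a,b,c,d} \<and>
        flip_op n i G ! i = transpose p q \<circ> flip_op n i G ! (i - 1) \<and>
        flip_op n i G ! Suc i = transpose r s \<circ> flip_op n i G ! i) \<and>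
     (\<forall>k. k \<noteq> i \<longrightarrow> flip_op n i G ! k = G ! k) \<and> length (flip_op n i G) = length G"
proof -
  define x where "x = G ! (i - 1)"
  have si: "Suc (i - 1) = i" using i by simp
  have len: "length G = Suc h" and e: "\<And>k. k < h \<Longrightarrow> bedge n (G ! k) (G ! Suc k)"
    and g0: "G ! 0 = u" and gh: "G ! h = v"
    using G by (auto simp: bpaths_def)
  have e1: "bedge n x (G ! i)" using e[of "i - 1"] i si unfolding x_def by simp
  have e2: "bedge n (G ! i) (G ! Suc i)" using e[of i] i by simp
  have xs: "x \<in> sperm n" using e1 bedge_sperm by blast
  have ab: "a \<noteq> b" using e1 y bedge_ne unfolding x_def by metis
  have cd: "c \<noteq> d" using e2 z bedge_ne by metis
  obtain y' where y': "y' \<noteq> G ! i" "{w. bedge n x w \<and> bedge n w (G ! Suc i)} = {G ! i, y'}"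
    and lab: "\<exists>p q r s. p \<in> {a,b,c,d} \<and> q \<in> {a,b,c,d} \<and> r \<in> {a,b,c,d} \<and> s \<in> {a,b,c,d} \<and>
        y' = transpose p q \<circ> x \<and> G ! Suc i = transpose r s \<circ> y'"
    using flip_main[OF xs rng ab cd y[folded x_def] z e1 e2] by blast
  have fv: "flip_vertex n x (G ! i) (G ! Suc i) = y'" "flip_vertex n x y' (G ! Suc i) = G ! i"
    using flip_vertex_eq[OF y'(2)] y'(1) by auto
  have il: "i < length G" using i len by simp
  have F: "flip_op n i G = G[i := y']" unfolding flip_op_def x_def[symmetric] fv(1) ..
  have Fn: "\<And>k. flip_op n i G ! k = (if k = i then y' else G ! k)" using F il by auto
  have ey': "bedge n x y'" "bedge n y' (G ! Suc i)" using y'(2) by blast+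
  have bp: "flip_op n i G \<in> bpaths n h u v"
    unfolding bpaths_def
  proof (intro CollectI conjI allI impI)
    show "length (flip_op n i G) = Suc h" using F len by simp
    show "flip_op n i G ! 0 = u" using Fn g0 i by simp
    show "flip_op n i G ! h = v" using Fn gh i by simp
    fix k assume k: "k < h"
    show "bedge n (flip_op n i G ! k) (flip_op n i G ! Suc k)"
    proof (cases "k = i")
      case True then show ?thesis using Fn ey'(2) by simp
    next
      case False
      show ?thesis
      proof (cases "Suc k = i")
        case True
        then have "k = i - 1" by simp
        then have "flip_op n i G ! k = x" "flip_op n i G ! Suc k = y'" using Fn False True unfolding x_def by auto
        then show ?thesis using ey'(1) by simp
      next
        case False2: False
        then show ?thesis using Fn False e[OF k] by simp
      qed
    qed
  qed
  have inv: "flip_op n i (flip_op n i G) = G"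
  proof -
    have "flip_op n i (flip_op n i G) = (G[i := y'])[i := flip_vertex n x y' (G ! Suc i)]"
      unfolding flip_op_def F[unfolded flip_op_def] using il i
      by (simp add: x_def)
    also have "\<dots> = G" using fv(2) by simp
    finally show ?thesis .
  qed
  have l2: "\<exists>p q r s. p \<in> {a,b,c,d} \<and> q \<in> {a,b,c,d} \<and> r \<in> {a,b,c,d} \<and> s \<in> {a,b,c,d} \<and>
        flip_op n i G ! i = transpose p q \<circ> flip_op n i G ! (i - 1) \<and>
        flip_op n i G ! Suc i = transpose r s \<circ> flip_op n i G ! i"
  proof -
    obtain p q r s where pqrs: "p \<in> {a,b,c,d}" "q \<in> {a,b,c,d}" "r \<in> {a,b,c,d}" "s \<in> {a,b,c,d}"
        "y' = transpose p q \<circ> x" "G ! Suc i = transpose r s \<circ> y'" using lab by blast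
    have f1: "flip_op n i G ! i = y'" using Fn by simp
    have "i - 1 \<noteq> i" using i by simp
    then have f2: "flip_op n i G ! (i - 1) = x" using Fn unfolding x_def by simp
    have f3: "flip_op n i G ! Suc i = G ! Suc i" using Fn by simp
    show ?thesis unfolding f1 f2 f3 using pqrs by blast
  qed
  show ?thesis using bp inv l2 Fn F by simp
qed

definition mv :: "(nat \<Rightarrow> nat) \<Rightarrow> nat set" where "mv f = {a. f a \<noteq> a}"

definition supp0 :: "(nat \<Rightarrow> nat) list \<Rightarrow> nat \<Rightarrow> nat set" where
  "supp0 G h = (\<Union>k<h. mv (G ! Suc k \<circ> inv (G ! k)))"

definition good :: "nat \<Rightarrow> nat \<Rightarrow> (nat \<Rightarrow> nat) \<Rightarrow> (nat \<Rightarrow> nat) \<Rightarrow> nat set \<Rightarrow> (nat \<Rightarrow> nat) list \<Rightarrow> bool" where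
  "good n h u v S G \<longleftrightarrow> G \<in> bpaths n h u v \<and>
     (\<forall>k<h. \<exists>a b. a \<in> S \<and> b \<in> S \<and> G ! Suc k = transpose a b \<circ> G ! k)"

lemma mv_transpose: "a \<noteq> b \<Longrightarrow> mv (transpose a b) = {a, b}"
  by (auto simp: mv_def transpose_def)

lemma edge_label:
  assumes "bedge n x y"
  shows "\<exists>a b. 1 \<le> a \<and> a < b \<and> b \<le> n \<and> y = transpose a b \<circ> x \<and> y \<circ> inv x = transpose a b"
proof -
  obtain a b where ab: "1 \<le> a" "a < b" "b \<le> n" "y = transpose a b \<circ> x" using bedge_decomp[OF assms] by blast
  have xp: "x permutes {1..n}" using assms by (simp add: bedge_def sperm_def)
  have "y \<circ> inv x = transpose a b" using ab(4) by (simp add: comp_assoc permutes_inv_o(1)[OF xp])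
  then show ?thesis using ab by blast
qed

lemma supp0_props:
  assumes G: "G \<in> bpaths n h u v"
  shows "good n h u v (supp0 G h) G" "supp0 G h \<subseteq> {1..n}" "finite (supp0 G h)" "card (supp0 G h) \<le> 2 * h"
proof -
  have e: "\<And>k. k < h \<Longrightarrow> bedge n (G ! k) (G ! Suc k)" using G by (auto simp: bpaths_def)
  have lab: "\<And>k. k < h \<Longrightarrow> \<exists>a b. 1 \<le> a \<and> a < b \<and> b \<le> n \<and> G ! Suc k = transpose a b \<circ> G ! k \<and>
      mv (G ! Suc k \<circ> inv (G ! k)) = {a, b}"
  proof -
    fix k assume k: "k < h"
    obtain a b where ab: "1 \<le> a" "a < b" "b \<le> n" "G ! Suc k = transpose a b \<circ> G ! k"
      "G ! Suc k \<circ> inv (G ! k) = transpose a b" using edge_label[OF e[OF k]] by blast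
    have "mv (G ! Suc k \<circ> inv (G ! k)) = {a, b}" unfolding ab(5) using ab(2) by (simp add: mv_transpose)
    then show "\<exists>a b. 1 \<le> a \<and> a < b \<and> b \<le> n \<and> G ! Suc k = transpose a b \<circ> G ! k \<and>
      mv (G ! Suc k \<circ> inv (G ! k)) = {a, b}" using ab by blast
  qed
  show "good n h u v (supp0 G h) G" unfolding good_def
  proof (intro conjI G allI impI)
    fix k assume k: "k < h"
    obtain a b where "G ! Suc k = transpose a b \<circ> G ! k" "mv (G ! Suc k \<circ> inv (G ! k)) = {a, b}"
      using lab[OF k] by blast
    then show "\<exists>a b. a \<in> supp0 G h \<and> b \<in> supp0 G h \<and> G ! Suc k = transpose a b \<circ> G ! k"
      using k unfolding supp0_def by blast
  qed
  show "supp0 G h \<subseteq> {1..n}"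
  proof
    fix a assume "a \<in> supp0 G h"
    then obtain k where k: "k < h" "a \<in> mv (G ! Suc k \<circ> inv (G ! k))" unfolding supp0_def by blast
    then show "a \<in> {1..n}" using lab[OF k(1)] by auto
  qed
  have c2: "\<And>k. k \<in> {..<h} \<Longrightarrow> card (mv (G ! Suc k \<circ> inv (G ! k))) \<le> 2"
  proof -
    fix k assume "k \<in> {..<h}"
    then obtain a b where "mv (G ! Suc k \<circ> inv (G ! k)) = {a, b}" using lab by blast
    then show "card (mv (G ! Suc k \<circ> inv (G ! k))) \<le> 2" by (simp add: card_insert_if)
  qed
  have fin: "\<And>k. k \<in> {..<h} \<Longrightarrow> finite (mv (G ! Suc k \<circ> inv (G ! k)))"
  proof -
    fix k assume "k \<in> {..<h}"
    then obtain a b where "mv (G ! Suc k \<circ> inv (G ! k)) = {a, b}" using lab by blast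
    then show "finite (mv (G ! Suc k \<circ> inv (G ! k)))" by simp
  qed
  show "finite (supp0 G h)" unfolding supp0_def using fin by blast
  have "card (supp0 G h) \<le> (\<Sum>k<h. card (mv (G ! Suc k \<circ> inv (G ! k))))"
    unfolding supp0_def by (rule card_UN_le) simp
  also have "\<dots> \<le> (\<Sum>k<h. 2)" by (rule sum_mono) (use c2 in auto)
  finally show "card (supp0 G h) \<le> 2 * h" by simp
qed

lemma good_flip:
  assumes g: "good n h u v S G" and S: "S \<subseteq> {1..n}" and i: "1 \<le> i" "i < h"
  shows "good n h u v S (flip_op n i G)"
proof -
  have G: "G \<in> bpaths n h u v" using g by (simp add: good_def)
  have si: "Suc (i - 1) = i" using i by simp
  obtain a b where ab: "a \<in> S" "b \<in> S" "G ! i = transpose a b \<circ> G ! (i - 1)"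
  proof -
    have "i - 1 < h" using i by simp
    then have "\<exists>a b. a \<in> S \<and> b \<in> S \<and> G ! Suc (i - 1) = transpose a b \<circ> G ! (i - 1)"
      using g unfolding good_def by blast
    then show ?thesis using that unfolding si by blast
  qed
  obtain c d where cd: "c \<in> S" "d \<in> S" "G ! Suc i = transpose c d \<circ> G ! i"
    using g i unfolding good_def by blast
  have rng: "1 \<le> a" "a \<le> n" "1 \<le> b" "b \<le> n" "1 \<le> c" "c \<le> n" "1 \<le> d" "d \<le> n"
    using ab cd S by auto
  note fb = flip_bp[OF G i rng ab(3) cd(3)]
  have fb1: "flip_op n i G \<in> bpaths n h u v" using fb by (rule conjunct1)
  have fb3: "\<exists>p q r s. p \<in> {a,b,c,d} \<and> q \<in> {a,b,c,d} \<and> r \<in> {a,b,c,d} \<and> s \<in> {a,b,c,d} \<and>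
        flip_op n i G ! i = transpose p q \<circ> flip_op n i G ! (i - 1) \<and>
        flip_op n i G ! Suc i = transpose r s \<circ> flip_op n i G ! i" using fb by (elim conjE)
  have same: "\<And>k. k \<noteq> i \<Longrightarrow> flip_op n i G ! k = G ! k" using fb by (elim conjE) blast
  obtain p q r s where pqrs: "p \<in> {a,b,c,d}" "q \<in> {a,b,c,d}" "r \<in> {a,b,c,d}" "s \<in> {a,b,c,d}"
    "flip_op n i G ! i = transpose p q \<circ> flip_op n i G ! (i - 1)"
    "flip_op n i G ! Suc i = transpose r s \<circ> flip_op n i G ! i"
    using fb3 by (elim exE conjE) blast
  have pS: "p \<in> S" "q \<in> S" "r \<in> S" "s \<in> S" using pqrs ab cd by auto
  show ?thesis unfolding good_def
  proof (intro conjI allI impI)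
    show "flip_op n i G \<in> bpaths n h u v" by (rule fb1)
    fix k assume k: "k < h"
    show "\<exists>a b. a \<in> S \<and> b \<in> S \<and> flip_op n i G ! Suc k = transpose a b \<circ> flip_op n i G ! k"
    proof (cases "k = i")
      case True then show ?thesis using pqrs(6) pS(3,4) by (intro exI[of _ r] exI[of _ s]) simp
    next
      case False
      show ?thesis
      proof (cases "Suc k = i")
        case True
        then have "k = i - 1" by simp
        then show ?thesis using pqrs(5) pS(1,2) True by (intro exI[of _ p] exI[of _ q]) simp
      next
        case F2: False
        obtain a' b' where "a' \<in> S" "b' \<in> S" "G ! Suc k = transpose a' b' \<circ> G ! k"
          using g k unfolding good_def by blast
        moreover have "flip_op n i G ! Suc k = G ! Suc k" "flip_op n i G ! k = G ! k"
          using same[OF False] same[OF F2] by auto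
        ultimately show ?thesis by auto
      qed
    qed
  qed
qed

lemma flip_invol:
  assumes G: "G \<in> bpaths n h u v" and i: "1 \<le> i" "i < h"
  shows "flip_op n i (flip_op n i G) = G"
proof -
  have si: "Suc (i - 1) = i" using i by simp
  have e: "\<And>k. k < h \<Longrightarrow> bedge n (G ! k) (G ! Suc k)" using G by (auto simp: bpaths_def)
  obtain a b where ab: "1 \<le> a" "a < b" "b \<le> n" "G ! i = transpose a b \<circ> G ! (i - 1)"
    using edge_label[OF e[of "i - 1"]] i si by auto
  obtain c d where cd: "1 \<le> c" "c < d" "d \<le> n" "G ! Suc i = transpose c d \<circ> G ! i"
    using edge_label[OF e[of i]] i by auto
  show ?thesis using flip_bp[OF G i _ _ _ _ _ _ _ _ ab(4) cd(4)] ab cd by auto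
qed

definition fclass :: "nat \<Rightarrow> nat \<Rightarrow> (nat \<Rightarrow> nat) \<Rightarrow> (nat \<Rightarrow> nat) \<Rightarrow> (nat \<Rightarrow> nat) list \<Rightarrow> (nat \<Rightarrow> nat) list set" where
  "fclass n h u v G0 = {G'. (G0, G') \<in> (flip_rel n h u v \<union> (flip_rel n h u v)\<inverse>)\<^sup>*}"

lemma fclass_good:
  assumes G0: "G0 \<in> bpaths n h u v" and G: "G \<in> fclass n h u v G0"
  shows "good n h u v (supp0 G0 h) G"
proof -
  have S: "supp0 G0 h \<subseteq> {1..n}" using supp0_props[OF G0] by blast
  have "(G0, G) \<in> (flip_rel n h u v \<union> (flip_rel n h u v)\<inverse>)\<^sup>*" using G by (simp add: fclass_def)
  then show ?thesis
  proof (induction rule: rtrancl_induct)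
    case base then show ?case using supp0_props[OF G0] by blast
  next
    case (step G1 G2)
    from step.hyps(2) show ?case
    proof
      assume "(G1, G2) \<in> flip_rel n h u v"
      then obtain i where "G2 = flip_op n i G1" "1 \<le> i" "i < h" by (auto simp: flip_rel_def)
      then show ?case using good_flip[OF step.IH S] by simp
    next
      assume "(G1, G2) \<in> (flip_rel n h u v)\<inverse>"
      then obtain i where i: "G1 = flip_op n i G2" "G2 \<in> bpaths n h u v" "1 \<le> i" "i < h"
        by (auto simp: flip_rel_def)
      then have "G2 = flip_op n i G1" using flip_invol[OF i(2) i(3) i(4)] by simp
      then show ?case using good_flip[OF step.IH S i(3,4)] by simp
    qed
  qed
qed

lemma fclass_closed:
  assumes G0: "G0 \<in> bpaths n h u v" and G: "G \<in> fclass n h u v G0" and i: "1 \<le> i" "i < h"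
  shows "flip_op n i G \<in> fclass n h u v G0"
proof -
  have "G \<in> bpaths n h u v" using fclass_good[OF G0 G] by (simp add: good_def)
  then have "(G, flip_op n i G) \<in> flip_rel n h u v" using i by (auto simp: flip_rel_def)
  then show ?thesis using G unfolding fclass_def
    by (auto intro: rtrancl_into_rtrancl)
qed

definition enc :: "nat \<Rightarrow> (nat \<Rightarrow> nat) list \<Rightarrow> (nat \<Rightarrow> nat) list" where
  "enc h G = map (\<lambda>k. G ! Suc k \<circ> inv (G ! k)) [0..<h]"

lemma bp_step:
  assumes "G \<in> bpaths n h u v" "k < h"
  shows "G ! Suc k = (G ! Suc k \<circ> inv (G ! k)) \<circ> G ! k"
proof -
  have "bedge n (G ! k) (G ! Suc k)" using assms by (auto simp: bpaths_def)
  then have "G ! k permutes {1..n}" by (simp add: bedge_def sperm_def)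
  then show ?thesis by (simp add: comp_assoc permutes_inv_o(2))
qed

lemma enc_inj:
  assumes G1: "G1 \<in> bpaths n h u v" and G2: "G2 \<in> bpaths n h u v" and e: "enc h G1 = enc h G2"
  shows "G1 = G2"
proof -
  have ek: "\<And>k. k < h \<Longrightarrow> G1 ! Suc k \<circ> inv (G1 ! k) = G2 ! Suc k \<circ> inv (G2 ! k)"
  proof -
    fix k assume k: "k < h"
    have "enc h G1 ! k = enc h G2 ! k" using e by simp
    then show "G1 ! Suc k \<circ> inv (G1 ! k) = G2 ! Suc k \<circ> inv (G2 ! k)" using k by (simp add: enc_def)
  qed
  have "\<forall>k. k \<le> h \<longrightarrow> G1 ! k = G2 ! k"
  proof
    fix k show "k \<le> h \<longrightarrow> G1 ! k = G2 ! k"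
    proof (induction k)
      case 0 then show ?case using G1 G2 by (simp add: bpaths_def)
    next
      case (Suc k)
      show ?case
      proof
        assume "Suc k \<le> h"
        then have k: "k < h" by simp
        have "G1 ! Suc k = (G1 ! Suc k \<circ> inv (G1 ! k)) \<circ> G1 ! k" by (rule bp_step[OF G1 k])
        also have "\<dots> = (G2 ! Suc k \<circ> inv (G2 ! k)) \<circ> G2 ! k" using ek[OF k] Suc.IH k by simp
        also have "\<dots> = G2 ! Suc k" by (rule bp_step[OF G2 k, symmetric])
        finally show "G1 ! Suc k = G2 ! Suc k" .
      qed
    qed
  qed
  moreover have "length G1 = Suc h" "length G2 = Suc h" using G1 G2 by (auto simp: bpaths_def)
  ultimately show ?thesis by (intro nth_equalityI) auto
qed

lemma fclass_bound:
  assumes G0: "G0 \<in> bpaths n h u v"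
  shows "finite (fclass n h u v G0) \<and> card (fclass n h u v G0) \<le> (4 * h * h) ^ h"
proof -
  define S where "S = supp0 G0 h"
  define TS where "TS = (\<lambda>(a, b). transpose a b) ` (S \<times> S)"
  define F where "F = fclass n h u v G0"
  have finS: "finite S" and cS: "card S \<le> 2 * h" using supp0_props[OF G0] S_def by auto
  have finTS: "finite TS" unfolding TS_def using finS by simp
  have cTS: "card TS \<le> card S * card S" unfolding TS_def
    using card_image_le[of "S \<times> S" "\<lambda>(a, b). transpose a b"] finS by (simp add: card_cartesian_product)
  have goodF: "\<And>G. G \<in> F \<Longrightarrow> good n h u v S G" using fclass_good[OF G0] F_def S_def by blast
  have bpF: "\<And>G. G \<in> F \<Longrightarrow> G \<in> bpaths n h u v" using goodF by (simp add: good_def)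
  have sub: "enc h ` F \<subseteq> {ts. set ts \<subseteq> TS \<and> length ts = h}"
  proof
    fix ts assume "ts \<in> enc h ` F"
    then obtain G where G: "G \<in> F" "ts = enc h G" by blast
    have "\<And>k. k < h \<Longrightarrow> G ! Suc k \<circ> inv (G ! k) \<in> TS"
    proof -
      fix k assume k: "k < h"
      obtain a b where ab: "a \<in> S" "b \<in> S" "G ! Suc k = transpose a b \<circ> G ! k"
        using goodF[OF G(1)] k unfolding good_def by blast
      have "bedge n (G ! k) (G ! Suc k)" using bpF[OF G(1)] k by (auto simp: bpaths_def)
      then have "G ! k permutes {1..n}" by (simp add: bedge_def sperm_def)
      then have "G ! Suc k \<circ> inv (G ! k) = transpose a b" using ab(3)
        by (simp add: comp_assoc permutes_inv_o(1))
      then show "G ! Suc k \<circ> inv (G ! k) \<in> TS" unfolding TS_def using ab by force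
    qed
    then show "ts \<in> {ts. set ts \<subseteq> TS \<and> length ts = h}" using G by (auto simp: enc_def)
  qed
  have inj: "inj_on (enc h) F" using enc_inj bpF by (meson inj_onI)
  have fin: "finite F"
    using finite_imageD[OF finite_subset[OF sub finite_lists_length_eq[OF finTS]] inj] .
  have "card F = card (enc h ` F)" using card_image[OF inj] by simp
  also have "\<dots> \<le> card {ts. set ts \<subseteq> TS \<and> length ts = h}"
    by (rule card_mono[OF finite_lists_length_eq[OF finTS] sub])
  also have "\<dots> = card TS ^ h" by (rule card_lists_length_eq[OF finTS])
  also have "\<dots> \<le> (4 * h * h) ^ h"
  proof (rule power_mono)
    have "card S * card S \<le> (2 * h) * (2 * h)" using cS by (intro mult_mono) auto
    then show "card TS \<le> 4 * h * h" using cTS by simp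
  qed simp
  finally show ?thesis using fin F_def by simp
qed

lemma flipclass_fclass:
  assumes "flipclass n h F"
  obtains u v G0 where "G0 \<in> bpaths n h u v" "F = fclass n h u v G0"
  using assms unfolding flipclass_def fclass_def by blast

definition BF :: "nat \<Rightarrow> nat" where "BF h = (4 * h * h) ^ h"

lemma flipclass_props:
  assumes "flipclass n h F"
  shows "finite F" "card F \<le> BF h" "\<And>G. G \<in> F \<Longrightarrow> length G = Suc h"
    "\<And>G i. G \<in> F \<Longrightarrow> 1 \<le> i \<Longrightarrow> i < h \<Longrightarrow> flip_op n i G \<in> F"
proof -
  obtain u v G0 where G0: "G0 \<in> bpaths n h u v" and F: "F = fclass n h u v G0"
    using flipclass_fclass[OF assms] by blast
  show "finite F" "card F \<le> BF h" using fclass_bound[OF G0] F BF_def by auto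
  show "\<And>G. G \<in> F \<Longrightarrow> length G = Suc h" using fclass_good[OF G0] F by (auto simp: good_def bpaths_def)
  show "\<And>G i. G \<in> F \<Longrightarrow> 1 \<le> i \<Longrightarrow> i < h \<Longrightarrow> flip_op n i G \<in> F"
    using fclass_closed[OF G0] F by blast
qed

lemma length_label_seq: "length (label_seq G) = length G - 1"
  by (simp add: label_seq_def)

lemma flipclass_verts:
  assumes "flipclass n h F"
  shows "finite (verts F)" "card (verts F) \<le> Suc h * BF h"
proof -
  note p = flipclass_props[OF assms]
  show "finite (verts F)" unfolding verts_def using p(1) by simp
  have "card (verts F) \<le> (\<Sum>G\<in>F. card (set G))" unfolding verts_def by (rule card_UN_le[OF p(1)])
  also have "\<dots> \<le> (\<Sum>G\<in>F. Suc h)"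
    by (rule sum_mono) (metis card_length p(3))
  also have "\<dots> = card F * Suc h" by simp
  also have "\<dots> \<le> BF h * Suc h" using p(2) by (rule mult_right_mono) simp
  finally show "card (verts F) \<le> Suc h * BF h" by (simp add: mult.commute)
qed

lemma flipclass_labels:
  assumes "flipclass n h F"
  shows "finite (labels F)" "card (labels F) \<le> h * BF h"
proof -
  note p = flipclass_props[OF assms]
  show "finite (labels F)" unfolding labels_def using p(1) by simp
  have "card (labels F) \<le> (\<Sum>G\<in>F. card (set (label_seq G)))" unfolding labels_def by (rule card_UN_le[OF p(1)])
  also have "\<dots> \<le> (\<Sum>G\<in>F. h)"
  proof (rule sum_mono)
    fix G assume "G \<in> F"
    then have "length (label_seq G) = h" using p(3) by (simp add: length_label_seq)
    then show "card (set (label_seq G)) \<le> h" by (metis card_length)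
  qed
  also have "\<dots> = card F * h" by simp
  also have "\<dots> \<le> BF h * h" using p(2) by simp
  finally show "card (labels F) \<le> h * BF h" by (simp add: mult.commute)
qed

definition venc :: "(nat \<Rightarrow> nat) list set \<Rightarrow> (nat \<Rightarrow> nat) \<Rightarrow> nat" where
  "venc F = (SOME E. bij_betw E (verts F) {0..<card (verts F)})"

definition lrank :: "(nat \<Rightarrow> nat) list set \<Rightarrow> nat \<times> nat \<Rightarrow> nat" where
  "lrank F s = card {t \<in> labels F. lex_less t s}"

definition ftype where
  "ftype n h F = (card (verts F), card (labels F),
     {(map (venc F) G, map (lrank F) (label_seq G), map (\<lambda>i. map (venc F) (flip_op n i G)) [1..<h]) | G. G \<in> F})"

lemma venc_bij:
  assumes "finite (verts F)" shows "bij_betw (venc F) (verts F) {0..<card (verts F)}"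
proof -
  obtain E where "bij_betw E (verts F) {0..<card (verts F)}" using ex_bij_betw_finite_nat[OF assms] by blast
  then show ?thesis unfolding venc_def by (rule someI[where P="\<lambda>E. bij_betw E (verts F) {0..<card (verts F)}"])
qed

lemma lex_irrefl: "\<not> lex_less s s" by (simp add: lex_less_def)
lemma lex_trans: "lex_less s t \<Longrightarrow> lex_less t u \<Longrightarrow> lex_less s u" by (auto simp: lex_less_def)
lemma lex_total: "s \<noteq> t \<Longrightarrow> lex_less s t \<or> lex_less t s"
  by (cases s; cases t) (auto simp: lex_less_def)

lemma lrank_mono:
  assumes "finite L" "s \<in> L" "t \<in> L" "lex_less s t"
  shows "card {u \<in> L. lex_less u s} < card {u \<in> L. lex_less u t}"
proof (rule psubset_card_mono)
  show "finite {u \<in> L. lex_less u t}" using assms(1) by simp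
  show "{u \<in> L. lex_less u s} \<subset> {u \<in> L. lex_less u t}"
    using assms lex_trans lex_irrefl by blast
qed

lemma lrank_bij:
  assumes fin: "finite (labels F)"
  shows "bij_betw (lrank F) (labels F) {0..<card (labels F)}"
proof -
  let ?L = "labels F"
  have inj: "inj_on (lrank F) ?L"
  proof (rule inj_onI)
    fix s t assume st: "s \<in> ?L" "t \<in> ?L" "lrank F s = lrank F t"
    show "s = t"
    proof (rule ccontr)
      assume "s \<noteq> t"
      then have "lex_less s t \<or> lex_less t s" by (rule lex_total)
      then show False using lrank_mono[OF fin] st unfolding lrank_def by fastforce
    qed
  qed
  have sub: "lrank F ` ?L \<subseteq> {0..<card ?L}"
  proof
    fix r assume "r \<in> lrank F ` ?L"
    then obtain s where s: "s \<in> ?L" "r = lrank F s" by blast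
    have "{u \<in> ?L. lex_less u s} \<subset> ?L" using s lex_irrefl by blast
    then have "card {u \<in> ?L. lex_less u s} < card ?L" using fin by (rule psubset_card_mono[rotated])
    then show "r \<in> {0..<card ?L}" using s unfolding lrank_def by simp
  qed
  have "lrank F ` ?L = {0..<card ?L}"
    by (rule card_subset_eq[OF _ sub]) (simp_all add: card_image[OF inj])
  then show ?thesis using inj by (simp add: bij_betw_def)
qed

lemma inv_into_map:
  assumes "bij_betw E V W" "set xs \<subseteq> V"
  shows "map (inv_into V E) (map E xs) = xs"
proof -
  have "inj_on E V" using assms(1) by (simp add: bij_betw_def)
  then show ?thesis using assms(2) by (simp add: map_idI subset_iff inv_into_f_f)
qed

lemma set_sub_verts: "G \<in> F \<Longrightarrow> set G \<subseteq> verts F"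
  by (auto simp: verts_def)

lemma set_sub_labels: "G \<in> F \<Longrightarrow> set (label_seq G) \<subseteq> labels F"
  by (auto simp: labels_def)

lemma iso_from_type:
  assumes FC: "flipclass n h F" and FC': "flipclass m h F'" and T: "ftype n h F = ftype m h F'"
  shows "\<exists>f g. flip_iso n h F m F' f g"
proof -
  define V where "V = verts F"
  define V' where "V' = verts F'"
  define L where "L = labels F"
  define L' where "L' = labels F'"
  define E where "E = venc F"
  define E' where "E' = venc F'"
  define R where "R = lrank F"
  define R' where "R' = lrank F'"
  have cV: "card V = card V'" and cL: "card L = card L'"
    and D: "{(map E G, map R (label_seq G), map (\<lambda>i. map E (flip_op n i G)) [1..<h]) | G. G \<in> F} =
            {(map E' G, map R' (label_seq G), map (\<lambda>i. map E' (flip_op m i G)) [1..<h]) | G. G \<in> F'}"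
    using T unfolding ftype_def V_def V'_def L_def L'_def E_def E'_def R_def R'_def by auto
  have bE: "bij_betw E V {0..<card V}" unfolding E_def V_def using venc_bij flipclass_verts(1)[OF FC] by blast
  have bE': "bij_betw E' V' {0..<card V}" unfolding E'_def V'_def cV V'_def using venc_bij flipclass_verts(1)[OF FC'] by blast
  have bR: "bij_betw R L {0..<card L}" unfolding R_def L_def using lrank_bij flipclass_labels(1)[OF FC] by blast
  have bR': "bij_betw R' L' {0..<card L}" unfolding R'_def L'_def cL L'_def using lrank_bij flipclass_labels(1)[OF FC'] by blast
  define f where "f = inv_into V' E' \<circ> E"
  define g where "g = inv_into L' R' \<circ> R"
  have bf: "bij_betw f V V'" unfolding f_def by (rule bij_betw_trans[OF bE bij_betw_inv_into[OF bE']])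
  have bg: "bij_betw g L L'" unfolding g_def by (rule bij_betw_trans[OF bR bij_betw_inv_into[OF bR']])
  have sV: "\<And>G. G \<in> F \<Longrightarrow> set G \<subseteq> V" unfolding V_def by (rule set_sub_verts)
  have sV': "\<And>G. G \<in> F' \<Longrightarrow> set G \<subseteq> V'" unfolding V'_def by (rule set_sub_verts)
  have sL': "\<And>G. G \<in> F' \<Longrightarrow> set (label_seq G) \<subseteq> L'" unfolding L'_def by (rule set_sub_labels)
  have mf: "\<And>xs. map f xs = map (inv_into V' E') (map E xs)" unfolding f_def by simp
  have mg: "\<And>xs. map g xs = map (inv_into L' R') (map R xs)" unfolding g_def by simp
  have partner: "\<And>G. G \<in> F \<Longrightarrow> map f G \<in> F' \<and>
      map R' (label_seq (map f G)) = map R (label_seq G) \<and>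
      map (\<lambda>i. map E' (flip_op m i (map f G))) [1..<h] = map (\<lambda>i. map E (flip_op n i G)) [1..<h]"
  proof -
    fix G assume G: "G \<in> F"
    then have "(map E G, map R (label_seq G), map (\<lambda>i. map E (flip_op n i G)) [1..<h]) \<in>
       {(map E' G, map R' (label_seq G), map (\<lambda>i. map E' (flip_op m i G)) [1..<h]) | G. G \<in> F'}"
      using D by blast
    then obtain G' where G': "G' \<in> F'" "map E' G' = map E G" "map R' (label_seq G') = map R (label_seq G)"
      "map (\<lambda>i. map E' (flip_op m i G')) [1..<h] = map (\<lambda>i. map E (flip_op n i G)) [1..<h]" by auto
    have "map f G = G'" unfolding mf G'(2)[symmetric] using inv_into_map[OF bE' sV'[OF G'(1)]] .
    then show "map f G \<in> F' \<and>
      map R' (label_seq (map f G)) = map R (label_seq G) \<and>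
      map (\<lambda>i. map E' (flip_op m i (map f G))) [1..<h] = map (\<lambda>i. map E (flip_op n i G)) [1..<h]"
      using G' by simp
  qed
  have surjF: "\<And>G'. G' \<in> F' \<Longrightarrow> \<exists>G \<in> F. map f G = G'"
  proof -
    fix G' assume G': "G' \<in> F'"
    then have "(map E' G', map R' (label_seq G'), map (\<lambda>i. map E' (flip_op m i G')) [1..<h]) \<in>
       {(map E G, map R (label_seq G), map (\<lambda>i. map E (flip_op n i G)) [1..<h]) | G. G \<in> F}"
      using D by blast
    then obtain G where G: "G \<in> F" "map E G = map E' G'" by auto
    have "map f G = G'" unfolding mf G(2) using inv_into_map[OF bE' sV'[OF G']] .
    then show "\<exists>G \<in> F. map f G = G'" using G by blast
  qed
  have injf: "inj_on f V" using bf by (simp add: bij_betw_def)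
  have bmap: "bij_betw (map f) F F'"
  proof (rule bij_betw_imageI)
    show "inj_on (map f) F"
    proof (rule inj_onI)
      fix G1 G2 assume "G1 \<in> F" "G2 \<in> F" "map f G1 = map f G2"
      moreover have "inj_on f (set G1 \<union> set G2)" using injf sV \<open>G1 \<in> F\<close> \<open>G2 \<in> F\<close>
        by (meson inj_on_subset le_sup_iff)
      ultimately show "G1 = G2" using inj_on_map_eq_map by blast
    qed
    show "map f ` F = F'" using partner surjF by blast
  qed
  have flips: "\<forall>G\<in>F. \<forall>i. 1 \<le> i \<and> i < h \<longrightarrow> map f (flip_op n i G) = flip_op m i (map f G)"
  proof (intro ballI allI impI)
    fix G i assume G: "G \<in> F" and i: "1 \<le> i \<and> i < h"
    have p: "map (\<lambda>i. map E' (flip_op m i (map f G))) [1..<h] = map (\<lambda>i. map E (flip_op n i G)) [1..<h]"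
      using partner[OF G] by blast
    have e: "map E' (flip_op m i (map f G)) = map E (flip_op n i G)" using p i by (simp add: map_eq_conv)
    have inF': "flip_op m i (map f G) \<in> F'" using flipclass_props(4)[OF FC'] partner[OF G] i by blast
    have "map f (flip_op n i G) = map (inv_into V' E') (map E (flip_op n i G))" by (rule mf)
    also have "\<dots> = map (inv_into V' E') (map E' (flip_op m i (map f G)))" by (simp only: e)
    also have "\<dots> = flip_op m i (map f G)" using inv_into_map[OF bE' sV'[OF inF']] .
    finally show "map f (flip_op n i G) = flip_op m i (map f G)" .
  qed
  have labs: "\<forall>G\<in>F. label_seq (map f G) = map g (label_seq G)"
  proof
    fix G assume G: "G \<in> F"
    have e: "map R' (label_seq (map f G)) = map R (label_seq G)" using partner[OF G] by blast
    have "map g (label_seq G) = map (inv_into L' R') (map R (label_seq G))" by (rule mg)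
    also have "\<dots> = map (inv_into L' R') (map R' (label_seq (map f G)))" by (simp only: e)
    also have "\<dots> = label_seq (map f G)" using inv_into_map[OF bR' sL'] partner[OF G] by blast
    finally show "label_seq (map f G) = map g (label_seq G)" ..
  qed
  have Rg: "\<And>s. s \<in> L \<Longrightarrow> R' (g s) = R s \<and> g s \<in> L'"
  proof -
    fix s assume s: "s \<in> L"
    have "R s \<in> {0..<card L}" using bR s by (auto simp: bij_betw_def)
    then have "R s \<in> R' ` L'" using bR' by (simp add: bij_betw_def)
    then show "R' (g s) = R s \<and> g s \<in> L'" unfolding g_def by (auto intro: f_inv_into_f inv_into_into)
  qed
  have finL': "finite L'" unfolding L'_def using flipclass_labels(1)[OF FC'] .
  have finL: "finite L" unfolding L_def using flipclass_labels(1)[OF FC] .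
  have ord: "\<forall>s\<in>L. \<forall>t\<in>L. lex_less s t \<longrightarrow> lex_less (g s) (g t)"
  proof (intro ballI impI)
    fix s t assume st: "s \<in> L" "t \<in> L" "lex_less s t"
    have lt: "R s < R t" using lrank_mono[OF finL st] unfolding R_def lrank_def L_def .
    show "lex_less (g s) (g t)"
    proof (rule ccontr)
      assume nl: "\<not> lex_less (g s) (g t)"
      have "R' (g t) \<le> R' (g s)"
      proof (cases "g s = g t")
        case True then show ?thesis by simp
      next
        case False
        then have "lex_less (g t) (g s)" using lex_total nl by blast
        moreover have "g s \<in> L'" "g t \<in> L'" using Rg st by auto
        ultimately have "card {u \<in> L'. lex_less u (g t)} < card {u \<in> L'. lex_less u (g s)}"
          using lrank_mono[OF finL'] by blast
        then show ?thesis unfolding R'_def lrank_def L'_def by simp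
      qed
      then show False using Rg st lt by simp
    qed
  qed
  have "flip_iso n h F m F' f g"
    unfolding flip_iso_def using bf bmap flips bg labs ord
    unfolding V_def V'_def L_def L'_def by blast
  then show ?thesis by blast
qed

definition Lset :: "nat \<Rightarrow> 'a set \<Rightarrow> 'a list set" where
  "Lset k A = {xs. set xs \<subseteq> A \<and> length xs = k}"

lemma finite_Lset: "finite A \<Longrightarrow> finite (Lset k A)"
  unfolding Lset_def by (rule finite_lists_length_eq)

definition Ub :: "nat \<Rightarrow> (nat \<times> nat \<times> (nat list \<times> nat list \<times> nat list list) set) set" where
  "Ub h = {0..Suc h * BF h} \<times> {0..h * BF h} \<times>
     Pow (Lset (Suc h) {0..<Suc h * BF h} \<times> Lset h {0..<h * BF h} \<times> Lset (h - 1) (Lset (Suc h) {0..<Suc h * BF h}))"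

lemma finite_Ub: "finite (Ub h)"
  unfolding Ub_def by (intro finite_cartesian_product finite_Pow_iff[THEN iffD2] finite_Lset) auto

lemma ftype_in_Ub:
  assumes FC: "flipclass n h F"
  shows "ftype n h F \<in> Ub h"
proof -
  note p = flipclass_props[OF FC]
  have cV: "card (verts F) \<le> Suc h * BF h" using flipclass_verts[OF FC] by blast
  have cL: "card (labels F) \<le> h * BF h" using flipclass_labels[OF FC] by blast
  have bE: "bij_betw (venc F) (verts F) {0..<card (verts F)}" using venc_bij flipclass_verts(1)[OF FC] by blast
  have bR: "bij_betw (lrank F) (labels F) {0..<card (labels F)}" using lrank_bij flipclass_labels(1)[OF FC] by blast
  have mE: "\<And>G. G \<in> F \<Longrightarrow> map (venc F) G \<in> Lset (Suc h) {0..<Suc h * BF h}"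
  proof -
    fix G assume G: "G \<in> F"
    have "set (map (venc F) G) \<subseteq> {0..<Suc h * BF h}"
    proof
      fix r assume "r \<in> set (map (venc F) G)"
      then obtain x where x: "x \<in> set G" "r = venc F x" by auto
      then have "x \<in> verts F" using set_sub_verts[OF G] by blast
      then have "r < card (verts F)" using bE x(2) by (auto simp: bij_betw_def)
      then show "r \<in> {0..<Suc h * BF h}" using cV by simp
    qed
    then show "map (venc F) G \<in> Lset (Suc h) {0..<Suc h * BF h}" using p(3)[OF G] by (simp add: Lset_def)
  qed
  have mR: "\<And>G. G \<in> F \<Longrightarrow> map (lrank F) (label_seq G) \<in> Lset h {0..<h * BF h}"
  proof -
    fix G assume G: "G \<in> F"
    have "set (map (lrank F) (label_seq G)) \<subseteq> {0..<h * BF h}"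
    proof
      fix r assume "r \<in> set (map (lrank F) (label_seq G))"
      then obtain x where x: "x \<in> set (label_seq G)" "r = lrank F x" by auto
      then have "x \<in> labels F" using set_sub_labels[OF G] by blast
      then have "r < card (labels F)" using bR x(2) by (auto simp: bij_betw_def)
      then show "r \<in> {0..<h * BF h}" using cL by simp
    qed
    then show "map (lrank F) (label_seq G) \<in> Lset h {0..<h * BF h}"
      using p(3)[OF G] by (simp add: Lset_def length_label_seq)
  qed
  have mF: "\<And>G. G \<in> F \<Longrightarrow> map (\<lambda>i. map (venc F) (flip_op n i G)) [1..<h] \<in> Lset (h - 1) (Lset (Suc h) {0..<Suc h * BF h})"
  proof -
    fix G assume G: "G \<in> F"
    have "\<And>i. i \<in> set [1..<h] \<Longrightarrow> map (venc F) (flip_op n i G) \<in> Lset (Suc h) {0..<Suc h * BF h}"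
      using mE p(4)[OF G] by simp
    then have "set (map (\<lambda>i. map (venc F) (flip_op n i G)) [1..<h]) \<subseteq> Lset (Suc h) {0..<Suc h * BF h}"
      by auto
    then show "map (\<lambda>i. map (venc F) (flip_op n i G)) [1..<h] \<in> Lset (h - 1) (Lset (Suc h) {0..<Suc h * BF h})"
      by (simp add: Lset_def del: set_map)
  qed
  show ?thesis unfolding ftype_def Ub_def using cV cL mE mR mF by auto
qed

theorem corollary6p13:
  fixes h :: nat
  shows "\<exists>S :: (nat \<times> (nat \<Rightarrow> nat) list set) set. finite S \<and>
    (\<forall>n F. 1 \<le> n \<and> flipclass n h F \<longrightarrow>
       (\<exists>(m, F') \<in> S. 1 \<le> m \<and> flipclass m h F' \<and> (\<exists>f g. flip_iso n h F m F' f g)))"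
proof -
  define T where "T = {ftype n h F | n F. 1 \<le> n \<and> flipclass n h F}"
  define rep where "rep \<tau> = (SOME p. 1 \<le> fst p \<and> flipclass (fst p) h (snd p) \<and> ftype (fst p) h (snd p) = \<tau>)" for \<tau>
  have finT: "finite T"
    by (rule finite_subset[OF _ finite_Ub[of h]]) (auto simp: T_def intro: ftype_in_Ub)
  have "finite (rep ` T)" using finT by simp
  moreover have "\<forall>n F. 1 \<le> n \<and> flipclass n h F \<longrightarrow>
       (\<exists>(m, F') \<in> rep ` T. 1 \<le> m \<and> flipclass m h F' \<and> (\<exists>f g. flip_iso n h F m F' f g))"
  proof (intro allI impI)
    fix n F assume nF: "1 \<le> n \<and> flipclass n h F"
    define \<tau> where "\<tau> = ftype n h F"
    have inT: "\<tau> \<in> T" using nF unfolding T_def \<tau>_def by blast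
    have ex: "\<exists>p. 1 \<le> fst p \<and> flipclass (fst p) h (snd p) \<and> ftype (fst p) h (snd p) = \<tau>"
      using nF \<tau>_def by (intro exI[of _ "(n, F)"]) simp
    obtain m F' where r: "rep \<tau> = (m, F')" by (cases "rep \<tau>") auto
    have "1 \<le> fst (rep \<tau>) \<and> flipclass (fst (rep \<tau>)) h (snd (rep \<tau>)) \<and> ftype (fst (rep \<tau>)) h (snd (rep \<tau>)) = \<tau>"
      unfolding rep_def by (rule someI_ex[OF ex])
    then have m: "1 \<le> m" "flipclass m h F'" "ftype m h F' = \<tau>" using r by auto
    have "\<exists>f g. flip_iso n h F m F' f g"
      by (rule iso_from_type) (use nF m \<tau>_def in auto)
    then show "\<exists>(m, F') \<in> rep ` T. 1 \<le> m \<and> flipclass m h F' \<and> (\<exists>f g. flip_iso n h F m F' f g)"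
      using m inT r by (intro bexI[of _ "(m, F')"]) (auto intro: rev_image_eqI[of \<tau>])
  qed
  ultimately show ?thesis by blast
qed

end
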